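(* For every $\alpha\in(0,\pi/2]$, the system of two equations in the real unknowns $(d,u_1)$ $$18(4\cos\alpha-3)u_1^2+3d(d^2-10)\Big(\cos\tfrac{\alpha}{2}-2\cos\tfrac{3\alpha}{2}\Big)u_1+\cos^2\tfrac{\alpha}{2}\Big(-3d^6+18d^4-34d^2-420+4d^2(d^4-6d^2+30)\cos\alpha\Big)=0,$$ $$36\Big(3\sin\tfrac{3\alpha}{2}-11\sin\tfrac{\alpha}{2}\Big)u_1^2+6\sin\tfrac{\alpha}{2}\Big(5\cos\tfrac{\alpha}{2}-3\cos\tfrac{3\alpha}{2}\Big)d(d^2-10)u_1+\Big(840\alpha-8d^2(d^4-6d^2+30)\sin\alpha+d^2(3d^4-18d^2+34)\sin(2\alpha)\Big)\cos\tfrac{\alpha}{2}=0$$ has no real solutions.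
   Context: This system arises in interpolating the $G^2$ data and arc length of a circular arc of inner angle $2\alpha$ by a planar Pythagorean-hodograph curve of degree $7$, in the case $u_2=-u_1+\frac16 d(d^2-10)\cos(\alpha/2)$ of the non-symmetric preimage coefficients; only the explicit equations above are needed. *)

theory Defs
  imports Complex_Main
begin

end

theory Submission
  imports Defs
begin

lemma pos_from0:
  fixes f f' :: "real \<Rightarrow> real"
  assumes "0 < a" "f 0 = 0"
    and der: "\<And>x. (f has_real_derivative f' x) (at x)"
    and pos: "\<And>x. 0 < x \<Longrightarrow> x < a \<Longrightarrow> f' x > 0"
  shows "f a > 0"
proof -
  have con: "continuous_on {0..a} f"
    using der by (meson DERIV_isCont continuous_at_imp_continuous_on)
  have "f 0 < f a"
    using DERIV_pos_imp_increasing_open[OF assms(1) _ con] der pos by blast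
  then show ?thesis using assms(2) by simp
qed

lemma nonneg_from0:
  fixes f f' :: "real \<Rightarrow> real"
  assumes "0 \<le> a" "f 0 = 0"
    and der: "\<And>x. (f has_real_derivative f' x) (at x)"
    and pos: "\<And>x. 0 \<le> x \<Longrightarrow> x \<le> a \<Longrightarrow> f' x \<ge> 0"
  shows "f a \<ge> 0"
proof -
  have "f 0 \<le> f a"
    by (rule DERIV_nonneg_imp_nondecreasing[OF assms(1)]) (use der pos in blast)
  then show ?thesis using assms(2) by simp
qed

lemma beta_pos:
  assumes "0 < a" "a \<le> pi/2"
  shows "a*(3-4*cos a) + sin a*(4-3*cos a) > 0"
proof (rule pos_from0[where f="\<lambda>x. x*(3-4*cos x) + sin x*(4-3*cos x)" and f'="\<lambda>x. 6*(sin x)^2 + 4*x*sin x", simplified])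
  show "0 < a" by fact
  fix x :: real
  show "((\<lambda>x. x*(3-4*cos x) + sin x*(4-3*cos x)) has_real_derivative 6*(sin x)^2 + 4*x*sin x) (at x)"
    apply (rule derivative_eq_intros refl)+
    using sin_cos_squared_add[of x] by algebra
  assume "0 < x" "x < a"
  then have "sin x > 0" using assms by (intro sin_gt_zero) auto
  then show "0 < 6*(sin x)^2 + 4*x*sin x" using \<open>0<x\<close> by (simp add: add_pos_pos)
qed

lemma ycos_le_sin:
  assumes "0 \<le> y" "y \<le> pi"
  shows "y * cos y \<le> sin y"
proof -
  have "sin y - y * cos y \<ge> 0"
  proof (rule nonneg_from0[where f="\<lambda>x. sin x - x * cos x" and f'="\<lambda>x. x * sin x"])
    show "0 \<le> y" by fact
    fix x :: real
    show "((\<lambda>x. sin x - x * cos x) has_real_derivative x * sin x) (at x)"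
      by (rule derivative_eq_intros refl)+ (simp add: algebra_simps)
    assume "0 \<le> x" "x \<le> y"
    then show "0 \<le> x * sin x" using assms sin_ge_zero by simp
  qed simp
  then show ?thesis by simp
qed

lemma sin_ge_half:
  assumes "0 \<le> x" "x \<le> pi/2"
  shows "x / 2 \<le> sin x"
proof -
  have c: "cos x \<ge> 0" using assms by (intro cos_ge_zero) auto
  have "(x/2) * cos (x/2) \<le> sin (x/2)" using assms by (intro ycos_le_sin) auto
  moreover have "cos (x/2) \<ge> 0" using assms by (intro cos_ge_zero) auto
  ultimately have "2*(x/2) * cos (x/2) * cos (x/2) \<le> 2 * sin (x/2) * cos (x/2)"
    by (simp add: mult_right_mono)
  also have "\<dots> = sin x" using sin_double[of "x/2"] by simp
  finally have "x * (cos (x/2))^2 \<le> sin x" by (simp add: power2_eq_square)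
  moreover have "(cos (x/2))^2 = (1 + cos x)/2" using cos_double_cos[of "x/2"] by simp
  ultimately have "x * ((1 + cos x)/2) \<le> sin x" by simp
  moreover have "x * ((1 + cos x)/2) \<ge> x/2" using c assms by (simp add: field_simps)
  ultimately show ?thesis by linarith
qed


lemma P_pos:
  assumes "0 < a" "a \<le> pi/2"
  shows "sin a - a * cos a > 0"
proof (rule pos_from0[where f="\<lambda>x. sin x - x * cos x" and f'="\<lambda>x. x * sin x"])
  show "0 < a" by fact
  fix x :: real
  show "((\<lambda>x. sin x - x * cos x) has_real_derivative x * sin x) (at x)"
    by (rule derivative_eq_intros refl)+ (simp add: algebra_simps)
  assume "0 < x" "x < a"
  then have "sin x > 0" using assms by (intro sin_gt_zero) auto
  then show "0 < x * sin x" using \<open>0<x\<close> by simp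
qed simp

lemma beta_le:
  assumes "0 \<le> a" "a \<le> pi/2"
  shows "a*(3-4*cos a) + sin a*(4-3*cos a) \<le> 5/4 * (8 * (sin a - a * cos a))"
proof -
  have "0 \<le> 6 * sin a - 6 * a * cos a - 3 * a + 3 * sin a * cos a"
  proof (rule nonneg_from0[where f="\<lambda>x. 6 * sin x - 6 * x * cos x - 3 * x + 3 * sin x * cos x"
        and f'="\<lambda>x. 6 * sin x * (x - sin x)"])
    show "0 \<le> a" by fact
    fix x :: real
    show "((\<lambda>x. 6 * sin x - 6 * x * cos x - 3 * x + 3 * sin x * cos x) has_real_derivative 6 * sin x * (x - sin x)) (at x)"
      apply (rule derivative_eq_intros refl)+
      using sin_cos_squared_add[of x] by algebra
    assume "0 \<le> x" "x \<le> a"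
    then have "sin x \<ge> 0" "sin x \<le> x" using assms by (auto intro!: sin_ge_zero sin_x_le_x)
    then show "0 \<le> 6 * sin x * (x - sin x)" by simp
  qed simp
  then show ?thesis by (simp add: algebra_simps)
qed

lemma Q_ge:
  assumes "0 \<le> a" "a \<le> pi/2"
  shows "(8 * (sin a - a * cos a)) / 10 \<le> 2 * a - 2 * sin a * cos a"
proof -
  have "0 \<le> 2 * a - 2 * sin a * cos a - 4/5 * (sin a - a * cos a)"
  proof (rule nonneg_from0[where f="\<lambda>x. 2 * x - 2 * sin x * cos x - 4/5 * (sin x - x * cos x)"
        and f'="\<lambda>x. 4 * sin x * (sin x - x / 5)"])
    show "0 \<le> a" by fact
    fix x :: real
    show "((\<lambda>x. 2 * x - 2 * sin x * cos x - 4/5 * (sin x - x * cos x)) has_real_derivative 4 * sin x * (sin x - x / 5)) (at x)"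
      apply (rule derivative_eq_intros refl)+
      using sin_cos_squared_add[of x] by algebra
    assume "0 \<le> x" "x \<le> a"
    then have "sin x \<ge> 0" "x/2 \<le> sin x" using assms by (auto intro!: sin_ge_zero) (use sin_ge_half[of x] in auto)
    then show "0 \<le> 4 * sin x * (sin x - x / 5)" using \<open>0 \<le> x\<close> by simp
  qed simp
  then show ?thesis by (simp add: field_simps)
qed


theorem mainTheorem3:
  fixes \<alpha> :: real
  assumes "0 < \<alpha>" and "\<alpha> \<le> pi / 2"
  shows "\<not> (\<exists>d u1 :: real.
     18 * (4 * cos \<alpha> - 3) * u1^2
       + 3 * d * (d^2 - 10) * (cos (\<alpha>/2) - 2 * cos (3*\<alpha>/2)) * u1
       + (cos (\<alpha>/2))^2 * (- 3 * d^6 + 18 * d^4 - 34 * d^2 - 420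
            + 4 * d^2 * (d^4 - 6 * d^2 + 30) * cos \<alpha>) = 0
   \<and> 36 * (3 * sin (3*\<alpha>/2) - 11 * sin (\<alpha>/2)) * u1^2
       + 6 * sin (\<alpha>/2) * (5 * cos (\<alpha>/2) - 3 * cos (3*\<alpha>/2)) * d * (d^2 - 10) * u1
       + (840 * \<alpha> - 8 * d^2 * (d^4 - 6 * d^2 + 30) * sin \<alpha>
            + d^2 * (3 * d^4 - 18 * d^2 + 34) * sin (2*\<alpha>)) * cos (\<alpha>/2) = 0)"
proof
  assume "\<exists>d u1 :: real.
     18 * (4 * cos \<alpha> - 3) * u1^2
       + 3 * d * (d^2 - 10) * (cos (\<alpha>/2) - 2 * cos (3*\<alpha>/2)) * u1
       + (cos (\<alpha>/2))^2 * (- 3 * d^6 + 18 * d^4 - 34 * d^2 - 420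
            + 4 * d^2 * (d^4 - 6 * d^2 + 30) * cos \<alpha>) = 0
   \<and> 36 * (3 * sin (3*\<alpha>/2) - 11 * sin (\<alpha>/2)) * u1^2
       + 6 * sin (\<alpha>/2) * (5 * cos (\<alpha>/2) - 3 * cos (3*\<alpha>/2)) * d * (d^2 - 10) * u1
       + (840 * \<alpha> - 8 * d^2 * (d^4 - 6 * d^2 + 30) * sin \<alpha>
            + d^2 * (3 * d^4 - 18 * d^2 + 34) * sin (2*\<alpha>)) * cos (\<alpha>/2) = 0"
  then obtain d u :: real where
    E1: "18 * (4 * cos \<alpha> - 3) * u^2
       + 3 * d * (d^2 - 10) * (cos (\<alpha>/2) - 2 * cos (3*\<alpha>/2)) * u
       + (cos (\<alpha>/2))^2 * (- 3 * d^6 + 18 * d^4 - 34 * d^2 - 420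
            + 4 * d^2 * (d^4 - 6 * d^2 + 30) * cos \<alpha>) = 0" and
    E2: "36 * (3 * sin (3*\<alpha>/2) - 11 * sin (\<alpha>/2)) * u^2
       + 6 * sin (\<alpha>/2) * (5 * cos (\<alpha>/2) - 3 * cos (3*\<alpha>/2)) * d * (d^2 - 10) * u
       + (840 * \<alpha> - 8 * d^2 * (d^4 - 6 * d^2 + 30) * sin \<alpha>
            + d^2 * (3 * d^4 - 18 * d^2 + 34) * sin (2*\<alpha>)) * cos (\<alpha>/2) = 0"
    by blast
  define c where "c = cos (\<alpha>/2)"
  define s where "s = sin (\<alpha>/2)"
  define ca where "ca = cos \<alpha>"
  define sa where "sa = sin \<alpha>"
  define \<beta> where "\<beta> = \<alpha>*(3-4*ca) + sa*(4-3*ca)"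
  define Pp where "Pp = 8 * (sa - \<alpha> * ca)"
  define Qq where "Qq = 2 * \<alpha> - 2 * sa * ca"
  define w where "w = d * (d^2 - 10)"
  define Pr where "Pr = d^6 - 6*d^4 + 30*d^2"
  define Qr where "Qr = 3*d^6 - 18*d^4 + 34*d^2"
  have hsa: "sa = 2*s*c" unfolding sa_def s_def c_def using sin_double[of "\<alpha>/2"] by simp
  have hca: "ca = 2*c^2 - 1" unfolding ca_def c_def using cos_double_cos[of "\<alpha>/2"] by simp
  have hsc: "s^2 + c^2 = 1" unfolding s_def c_def by simp
  have h3: "3*\<alpha>/2 = \<alpha> + \<alpha>/2" by simp
  have hc3: "cos (3*\<alpha>/2) = ca * c - sa * s"
    unfolding h3 cos_add ca_def c_def sa_def s_def ..
  have hs3: "sin (3*\<alpha>/2) = sa * c + ca * s"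
    unfolding h3 sin_add ca_def c_def sa_def s_def ..
  have hs2: "sin (2*\<alpha>) = 2 * sa * ca" unfolding sa_def ca_def by (rule sin_double)
  have key: "c * (36 * (3 * sin (3*\<alpha>/2) - 11 * s) * u^2
       + 6 * s * (5 * c - 3 * cos (3*\<alpha>/2)) * d * (d^2 - 10) * u
       + (840 * \<alpha> - 8 * d^2 * (d^4 - 6 * d^2 + 30) * sa
            + d^2 * (3 * d^4 - 18 * d^2 + 34) * sin (2*\<alpha>)) * c)
     + 2 * \<alpha> * (18 * (4 * ca - 3) * u^2
       + 3 * d * (d^2 - 10) * (c - 2 * cos (3*\<alpha>/2)) * u
       + c^2 * (- 3 * d^6 + 18 * d^4 - 34 * d^2 - 420
            + 4 * d^2 * (d^4 - 6 * d^2 + 30) * ca))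
     = c^2 * (\<beta> * w^2 / 4 - (Pp * Pr + Qq * Qr)) - \<beta> * (6*u - c*w/2)^2"
    unfolding hc3 hs3 hs2 \<beta>_def Pp_def Qq_def w_def Pr_def Qr_def
    using hsa hca hsc by algebra
  have zero: "c^2 * (\<beta> * w^2 / 4 - (Pp * Pr + Qq * Qr)) - \<beta> * (6*u - c*w/2)^2 = 0"
    using E1 E2 key unfolding c_def s_def ca_def sa_def by simp
  have cpos: "c > 0" unfolding c_def using assms by (intro cos_gt_zero) auto
  have bpos: "\<beta> > 0" unfolding \<beta>_def ca_def sa_def using beta_pos assms by simp
  have Pppos: "Pp > 0" unfolding Pp_def ca_def sa_def using P_pos assms by simp
  have ble: "\<beta> \<le> 5/4 * Pp" unfolding \<beta>_def Pp_def ca_def sa_def using beta_le assms by simp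
  have Qge: "Pp / 10 \<le> Qq" unfolding Qq_def Pp_def ca_def sa_def using Q_ge assms by simp
  show False
  proof (cases "d = 0")
    case True
    then have "\<beta> * (6*u)^2 = 0" using zero unfolding w_def Pr_def Qr_def by simp
    then have "u = 0" using bpos by simp
    then have "c^2 * 420 = 0" using E1 True unfolding c_def by simp
    then show False using cpos by simp
  next
    case False
    define y where "y = d^2"
    have ypos: "y > 0" unfolding y_def using False by simp
    have Qr0: "Qr \<ge> 0"
    proof -
      have "Qr = y * (3*(y-3)^2 + 7)" unfolding Qr_def y_def by algebra
      then show ?thesis using ypos by simp
    qed
    have poly: "Pr + Qr/10 - 5/16 * w^2 > 0"
    proof -
      have "Pr + Qr/10 - 5/16 * w^2 = y * (79/80 * y^2 - 31/20 * y + 43/20)"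
        unfolding Pr_def Qr_def w_def y_def by algebra
      moreover have "79/80 * y^2 - 31/20 * y + 43/20 > 0"
        using zero_le_power2[of "y - 1"] ypos by (simp add: power2_eq_square algebra_simps)
      ultimately show ?thesis using ypos by simp
    qed
    have "\<beta> * w^2 / 4 \<le> 5/16 * Pp * w^2"
      using ble mult_right_mono[OF ble, of "w^2"] by simp
    moreover have "Pp / 10 * Qr \<le> Qq * Qr" using mult_right_mono[OF Qge Qr0] .
    moreover have "Pp * (Pr + Qr/10 - 5/16 * w^2) > 0" using poly Pppos by simp
    ultimately have "\<beta> * w^2 / 4 - (Pp * Pr + Qq * Qr) < 0" by (simp add: algebra_simps)
    then have "c^2 * (\<beta> * w^2 / 4 - (Pp * Pr + Qq * Qr)) < 0" using cpos
      by (simp add: mult_pos_neg)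
    moreover have "\<beta> * (6*u - c*w/2)^2 \<ge> 0" using bpos by simp
    ultimately show False using zero by linarith
  qed
qed

end
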